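(* Let $S^1=\{z\in\mathbb{C}:|z|=1\}$, $\alpha\in(0,1)$, and $f:S^1\to S^1$, $f(z)=ze^{2\pi i\alpha}$. Let $\Delta$ be the partition of $S^1$ into orbits $\{f^k(z):k\in\mathbb{Z}\}$, $Y=S^1/\Delta$ with the quotient topology, and $p:S^1\to Y$ the projection. Then $p$ has property (CONT) for every $\alpha$, and $p$ has property (COMP) if and only if $\alpha$ is rational.
   Context: A $\Delta$-map is a continuous $h:S^1\to S^1$ mapping each element of $\Delta$ into some element of $\Delta$; $\mathrm{End}(S^1,\Delta)$ is the monoid of $\Delta$-maps, $\mathrm{End}(Y)=C(Y,Y)$, and $\psi(h)$ is the unique map with $p\circ h=\psi(h)\circ p$. Property (COMP): for every compact $L\subset Y$ there is a compact $K\subset S^1$ with $p(K)=L$. Property (CONT): $\psi:\mathrm{End}(S^1,\Delta)\to\mathrm{End}(Y)$ is continuous with respect to compact open topologies. *)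

theory Defs
  imports "HOL-Analysis.Analysis"
begin

definition quotient_space :: "'a topology \<Rightarrow> 'a set set \<Rightarrow> 'a set topology" where
  "quotient_space X Delta = topology (\<lambda>U. U \<subseteq> Delta \<and> openin X (\<Union>U))"

definition part_proj :: "'a set set \<Rightarrow> 'a \<Rightarrow> 'a set" where
  "part_proj Delta x = (THE D. D \<in> Delta \<and> x \<in> D)"

text \<open>Continuous self-maps of X, represented extensionally (undefined off the carrier).\<close>
definition End_maps :: "'a topology \<Rightarrow> ('a \<Rightarrow> 'a) set" where
  "End_maps X = {h. continuous_map X X h \<and> h \<in> extensional (topspace X)}"

definition Delta_maps :: "'a topology \<Rightarrow> 'a set set \<Rightarrow> ('a \<Rightarrow> 'a) set" where
  "Delta_maps X Delta = {h \<in> End_maps X. \<forall>D\<in>Delta. \<exists>E\<in>Delta. h ` D \<subseteq> E}"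

definition compact_open :: "'a topology \<Rightarrow> ('a \<Rightarrow> 'a) set \<Rightarrow> ('a \<Rightarrow> 'a) topology" where
  "compact_open X C =
     topology_generated_by {{h \<in> C. h ` K \<subseteq> U} | K U. compactin X K \<and> openin X U}"

definition psi :: "'a topology \<Rightarrow> 'a set set \<Rightarrow> ('a \<Rightarrow> 'a) \<Rightarrow> ('a set \<Rightarrow> 'a set)" where
  "psi X Delta h = (THE g. g \<in> End_maps (quotient_space X Delta) \<and>
        (\<forall>x\<in>topspace X. part_proj Delta (h x) = g (part_proj Delta x)))"

definition prop_COMP :: "'a topology \<Rightarrow> 'a set set \<Rightarrow> bool" where
  "prop_COMP X Delta \<longleftrightarrow>
     (\<forall>L. compactin (quotient_space X Delta) L \<longrightarrow>
          (\<exists>K. compactin X K \<and> part_proj Delta ` K = L))"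

definition prop_CONT :: "'a topology \<Rightarrow> 'a set set \<Rightarrow> bool" where
  "prop_CONT X Delta \<longleftrightarrow>
     continuous_map (compact_open X (Delta_maps X Delta))
       (compact_open (quotient_space X Delta) (End_maps (quotient_space X Delta)))
       (psi X Delta)"

definition circle :: "complex topology" where
  "circle = top_of_set (sphere 0 1)"

definition rot_orbit :: "real \<Rightarrow> complex \<Rightarrow> complex set" where
  "rot_orbit \<alpha> z = {z * exp (2 * of_real pi * \<i> * of_real \<alpha>) powi k | k :: int. True}"

definition rot_partition :: "real \<Rightarrow> complex set set" where
  "rot_partition \<alpha> = {rot_orbit \<alpha> z | z. z \<in> sphere 0 1}"

end

theory Submission
  imports Defs
begin


locale part =
  fixes X :: "'a topology" and Delta :: "'a set set"
  assumes U: "\<Union>Delta = topspace X"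
    and disj: "\<And>D E x. D \<in> Delta \<Longrightarrow> E \<in> Delta \<Longrightarrow> x \<in> D \<Longrightarrow> x \<in> E \<Longrightarrow> D = E"
    and ne: "{} \<notin> Delta"
begin

lemma istop: "istopology (\<lambda>U. U \<subseteq> Delta \<and> openin X (\<Union>U))"
proof -
  have "\<Union>(S \<inter> T) = \<Union>S \<inter> \<Union>T" if "S \<subseteq> Delta" "T \<subseteq> Delta" for S T
    using that disj by blast
  moreover have "openin X (\<Union>(\<Union>K))" if "\<forall>S\<in>K. S \<subseteq> Delta \<and> openin X (\<Union>S)" for K
  proof -
    have "\<Union>(\<Union>K) = \<Union>((\<lambda>S. \<Union>S) ` K)" by auto
    then show ?thesis using that by (simp, intro openin_Union) auto
  qed
  ultimately show ?thesis unfolding istopology_def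
    by (auto simp: openin_Int)
qed

lemma openin_Q: "openin (quotient_space X Delta) V \<longleftrightarrow> V \<subseteq> Delta \<and> openin X (\<Union>V)"
  unfolding quotient_space_def using topology_inverse'[OF istop] by simp

lemma topspace_Q: "topspace (quotient_space X Delta) = Delta"
proof -
  have "openin (quotient_space X Delta) Delta" using U openin_Q by auto
  then have "Delta \<subseteq> topspace (quotient_space X Delta)" by (simp add: openin_subset)
  moreover have "topspace (quotient_space X Delta) \<subseteq> Delta"
    using openin_Q openin_topspace by blast
  ultimately show ?thesis by blast
qed

lemma pp_eq: assumes "D \<in> Delta" "x \<in> D" shows "part_proj Delta x = D"
  unfolding part_proj_def
proof (rule the_equality)
  show "D \<in> Delta \<and> x \<in> D" using assms by simp
  fix E assume "E \<in> Delta \<and> x \<in> E"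
  then show "E = D" using disj assms by blast
qed

lemma pp_in: "x \<in> topspace X \<Longrightarrow> part_proj Delta x \<in> Delta \<and> x \<in> part_proj Delta x"
proof -
  assume "x \<in> topspace X"
  then obtain D where "D \<in> Delta" "x \<in> D" using U by blast
  then show ?thesis using pp_eq by simp
qed

lemma psi_props:
  assumes h: "h \<in> Delta_maps X Delta"
  shows "psi X Delta h \<in> End_maps (quotient_space X Delta) \<and>
     (\<forall>x\<in>topspace X. part_proj Delta (h x) = psi X Delta h (part_proj Delta x))"
proof -
  have hc: "continuous_map X X h" and hb: "\<And>D. D \<in> Delta \<Longrightarrow> \<exists>E\<in>Delta. h ` D \<subseteq> E"
    using h by (auto simp: Delta_maps_def End_maps_def)
  define g where "g D = (if D \<in> Delta then part_proj Delta (h (SOME x. x \<in> D)) else undefined)" for D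
  have gD: "g D = part_proj Delta (h x)" if dD: "D \<in> Delta" "x \<in> D" for D x
  proof -
    have "(SOME x. x \<in> D) \<in> D" using dD by (metis some_eq_imp)
    moreover obtain E where "E \<in> Delta" "h ` D \<subseteq> E" using hb dD by blast
    ultimately have "part_proj Delta (h (SOME x. x \<in> D)) = E" "part_proj Delta (h x) = E"
      using pp_eq dD by auto
    then show ?thesis by (simp add: g_def dD)
  qed
  have A: "\<forall>x\<in>topspace X. part_proj Delta (h x) = g (part_proj Delta x)"
    using gD pp_in by auto
  have Xsub: "\<And>D x. D \<in> Delta \<Longrightarrow> x \<in> D \<Longrightarrow> x \<in> topspace X" using U by blast
  have hX: "\<And>x. x \<in> topspace X \<Longrightarrow> h x \<in> topspace X" using continuous_map_image_subset_topspace[OF hc] by blast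
  have gE: "g \<in> End_maps (quotient_space X Delta)"
  proof -
    have ext: "g \<in> extensional (topspace (quotient_space X Delta))"
      unfolding topspace_Q g_def extensional_def by auto
    have img: "g D \<in> Delta" if dD: "D \<in> Delta" for D
    proof -
      obtain x where "x \<in> D" using dD ne by (metis ex_in_conv)
      then have "g D = part_proj Delta (h x)" using gD dD by blast
      moreover have "h x \<in> topspace X" using hX Xsub dD \<open>x \<in> D\<close> by blast
      ultimately show ?thesis using pp_in by simp
    qed
    have op: "openin (quotient_space X Delta) {D \<in> Delta. g D \<in> V}"
      if "openin (quotient_space X Delta) V" for V
    proof -
      have V: "V \<subseteq> Delta" "openin X (\<Union>V)" using that openin_Q by auto
      have "\<Union>{D \<in> Delta. g D \<in> V} = {x \<in> topspace X. h x \<in> \<Union>V}"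
      proof (intro set_eqI iffI)
        fix x assume "x \<in> \<Union>{D \<in> Delta. g D \<in> V}"
        then obtain D where D: "D \<in> Delta" "x \<in> D" "g D \<in> V" by blast
        then have "part_proj Delta (h x) \<in> V" using gD by simp
        moreover have "h x \<in> part_proj Delta (h x)" using pp_in hX Xsub D by blast
        ultimately show "x \<in> {x \<in> topspace X. h x \<in> \<Union>V}" using Xsub D by blast
      next
        fix x assume "x \<in> {x \<in> topspace X. h x \<in> \<Union>V}"
        then obtain E where x: "x \<in> topspace X" "E \<in> V" "h x \<in> E" by blast
        have "part_proj Delta (h x) = E" using pp_eq x V by blast
        then have "g (part_proj Delta x) \<in> V" using A x by simp
        then show "x \<in> \<Union>{D \<in> Delta. g D \<in> V}" using pp_in x by blast
      qed
      moreover have "openin X {x \<in> topspace X. h x \<in> \<Union>V}"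
        using openin_continuous_map_preimage[OF hc V(2)] .
      ultimately show ?thesis using openin_Q by auto
    qed
    have "continuous_map (quotient_space X Delta) (quotient_space X Delta) g"
      unfolding continuous_map_def topspace_Q using img op by auto
    then show ?thesis using ext by (simp add: End_maps_def)
  qed
  have uniq: "g' = g" if "g' \<in> End_maps (quotient_space X Delta)"
      "\<forall>x\<in>topspace X. part_proj Delta (h x) = g' (part_proj Delta x)" for g'
  proof
    fix D show "g' D = g D"
    proof (cases "D \<in> Delta")
      case True
      then obtain x where "x \<in> D" using ne by (metis ex_in_conv)
      then have "x \<in> topspace X" "part_proj Delta x = D" using True Xsub pp_eq by auto
      then show ?thesis using that(2) A by metis
    next
      case False
      then show ?thesis using that(1) gE by (auto simp: End_maps_def extensional_def topspace_Q)
    qed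
  qed
  have "psi X Delta h = g"
    unfolding psi_def
  proof (rule the_equality)
    show "g \<in> End_maps (quotient_space X Delta) \<and>
      (\<forall>x\<in>topspace X. part_proj Delta (h x) = g (part_proj Delta x))" using gE A by simp
    fix g' assume "g' \<in> End_maps (quotient_space X Delta) \<and>
      (\<forall>x\<in>topspace X. part_proj Delta (h x) = g' (part_proj Delta x))"
    then show "g' = g" using uniq by blast
  qed
  then show ?thesis using gE A by simp
qed

lemma topspace_CO: "topspace (compact_open Y C) = C"
proof -
  have "C \<in> {{h \<in> C. h ` K \<subseteq> U} | K U. compactin Y K \<and> openin Y U}"
    by (rule CollectI, rule exI[of _ "{}"], rule exI[of _ "{}"]) auto
  then show ?thesis unfolding compact_open_def topology_generated_by_topspace
    by (intro antisym) blast+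
qed

lemma preimage_char:
  assumes h: "h \<in> Delta_maps X Delta" and L: "L \<subseteq> Delta" and V: "V \<subseteq> Delta"
  shows "psi X Delta h ` L \<subseteq> V \<longleftrightarrow> h ` (\<Union>L) \<subseteq> \<Union>V"
proof -
  note P = psi_props[OF h]
  have hc: "continuous_map X X h" using h by (auto simp: Delta_maps_def End_maps_def)
  have Xsub: "\<And>D x. D \<in> Delta \<Longrightarrow> x \<in> D \<Longrightarrow> x \<in> topspace X" using U by blast
  have hX: "\<And>x. x \<in> topspace X \<Longrightarrow> h x \<in> topspace X" using continuous_map_image_subset_topspace[OF hc] by blast
  have key: "psi X Delta h D \<in> V \<longleftrightarrow> h x \<in> \<Union>V" if "D \<in> Delta" "x \<in> D" for D x
  proof -
    have "part_proj Delta (h x) = psi X Delta h (part_proj Delta x)" using P Xsub[OF that] by blast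
    then have "psi X Delta h D = part_proj Delta (h x)" using pp_eq[OF that] by simp
    moreover have "part_proj Delta (h x) \<in> V \<longleftrightarrow> h x \<in> \<Union>V"
      using pp_in pp_eq hX Xsub that V by blast
    ultimately show ?thesis by simp
  qed
  show ?thesis
  proof
    assume "psi X Delta h ` L \<subseteq> V" then show "h ` (\<Union>L) \<subseteq> \<Union>V" using key L by blast
  next
    assume a: "h ` (\<Union>L) \<subseteq> \<Union>V"
    show "psi X Delta h ` L \<subseteq> V"
    proof
      fix y assume "y \<in> psi X Delta h ` L"
      then obtain D where D: "D \<in> L" "y = psi X Delta h D" by blast
      then obtain x where "x \<in> D" using ne L by (metis ex_in_conv subsetD)
      then show "y \<in> V" using key a D L by blast
    qed
  qed
qed

lemma CONT_gen:
  assumes "\<And>L V. compactin (quotient_space X Delta) L \<Longrightarrow> openin (quotient_space X Delta) V \<Longrightarrow>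
     openin (compact_open X (Delta_maps X Delta)) {h \<in> Delta_maps X Delta. h ` (\<Union>L) \<subseteq> \<Union>V}"
  shows "prop_CONT X Delta"
  unfolding prop_CONT_def
proof (subst (2) compact_open_def, rule continuous_on_generated_topo)
  show "psi X Delta ` topspace (compact_open X (Delta_maps X Delta))
    \<subseteq> \<Union> {{h \<in> End_maps (quotient_space X Delta). h ` K \<subseteq> U} |K U.
             compactin (quotient_space X Delta) K \<and> openin (quotient_space X Delta) U}"
  proof
    fix g assume "g \<in> psi X Delta ` topspace (compact_open X (Delta_maps X Delta))"
    then obtain h where h: "h \<in> Delta_maps X Delta" "g = psi X Delta h"
      unfolding topspace_CO by blast
    then have "g \<in> {h \<in> End_maps (quotient_space X Delta). h ` {} \<subseteq> {}}"
      using psi_props[OF h(1)] by simp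
    moreover have "{h \<in> End_maps (quotient_space X Delta). h ` {} \<subseteq> {}} \<in>
      {{h \<in> End_maps (quotient_space X Delta). h ` K \<subseteq> U} |K U.
             compactin (quotient_space X Delta) K \<and> openin (quotient_space X Delta) U}"
      by (rule CollectI, rule exI[of _ "{}"], rule exI[of _ "{}"]) simp
    ultimately show "g \<in> \<Union> {{h \<in> End_maps (quotient_space X Delta). h ` K \<subseteq> U} |K U.
             compactin (quotient_space X Delta) K \<and> openin (quotient_space X Delta) U}"
      by (rule UnionI[rotated])
  qed
next
  fix B assume "B \<in> {{h \<in> End_maps (quotient_space X Delta). h ` K \<subseteq> U} |K U.
             compactin (quotient_space X Delta) K \<and> openin (quotient_space X Delta) U}"
  then obtain L V where B: "B = {h \<in> End_maps (quotient_space X Delta). h ` L \<subseteq> V}"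
    and L: "compactin (quotient_space X Delta) L" and V: "openin (quotient_space X Delta) V" by blast
  have LD: "L \<subseteq> Delta" using compactin_subset_topspace[OF L] topspace_Q by simp
  have VD: "V \<subseteq> Delta" using V openin_Q by blast
  have eq: "psi X Delta -` B \<inter> topspace (compact_open X (Delta_maps X Delta))
      = {h \<in> Delta_maps X Delta. h ` (\<Union>L) \<subseteq> \<Union>V}"
  proof (intro set_eqI iffI)
    fix h assume "h \<in> psi X Delta -` B \<inter> topspace (compact_open X (Delta_maps X Delta))"
    then have h: "h \<in> Delta_maps X Delta" "psi X Delta h ` L \<subseteq> V" unfolding topspace_CO B by auto
    then show "h \<in> {h \<in> Delta_maps X Delta. h ` (\<Union>L) \<subseteq> \<Union>V}"
      using preimage_char[OF h(1) LD VD] by simp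
  next
    fix h assume "h \<in> {h \<in> Delta_maps X Delta. h ` (\<Union>L) \<subseteq> \<Union>V}"
    then have h: "h \<in> Delta_maps X Delta" "h ` (\<Union>L) \<subseteq> \<Union>V" by auto
    then have "psi X Delta h ` L \<subseteq> V" using preimage_char[OF h(1) LD VD] by simp
    then show "h \<in> psi X Delta -` B \<inter> topspace (compact_open X (Delta_maps X Delta))"
      unfolding topspace_CO B using psi_props[OF h(1)] h by auto
  qed
  show "openin (compact_open X (Delta_maps X Delta))
     (psi X Delta -` B \<inter> topspace (compact_open X (Delta_maps X Delta)))"
    unfolding eq by (rule assms[OF L V])
qed

lemma subbasic: "compactin X K \<Longrightarrow> openin X W \<Longrightarrow>
   openin (compact_open X C) {h \<in> C. h ` K \<subseteq> W}"
  unfolding compact_open_def by (rule topology_generated_by_Basis) blast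

lemma COMP_gen:
  assumes "\<And>L. compactin (quotient_space X Delta) L \<Longrightarrow> compactin X (\<Union>L)"
  shows "prop_COMP X Delta"
  unfolding prop_COMP_def
proof (intro allI impI exI conjI)
  fix L assume L: "compactin (quotient_space X Delta) L"
  show "compactin X (\<Union>L)" using assms L .
  have LD: "L \<subseteq> Delta" using compactin_subset_topspace[OF L] topspace_Q by simp
  show "part_proj Delta ` \<Union> L = L"
  proof
    show "part_proj Delta ` \<Union> L \<subseteq> L" using pp_eq LD by blast
    show "L \<subseteq> part_proj Delta ` \<Union> L"
    proof
      fix D assume "D \<in> L"
      moreover obtain x where "x \<in> D" using ne LD \<open>D \<in> L\<close> by (metis ex_in_conv subsetD)
      ultimately show "D \<in> part_proj Delta ` \<Union> L" using pp_eq LD by blast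
    qed
  qed
qed

end



definition om :: "real \<Rightarrow> complex" where "om a = exp (2 * of_real pi * \<i> * of_real a)"

abbreviation S1 :: "complex set" where "S1 \<equiv> sphere 0 1"

lemma norm_om [simp]: "norm (om a) = 1"
  by (simp add: om_def)

lemma om_nz [simp]: "om a \<noteq> 0"
  by (simp add: om_def)

lemma norm_om_powi [simp]: "norm (om a powi k) = 1"
  by (simp add: norm_power_int)

lemma orbit_def2: "rot_orbit a z = {z * om a powi k | k. True}"
  by (simp add: rot_orbit_def om_def)

lemma orbit_sphere: "z \<in> S1 \<Longrightarrow> rot_orbit a z \<subseteq> S1"
  by (auto simp: orbit_def2 norm_mult)

lemma orbit_self: "z \<in> rot_orbit a z"
  unfolding orbit_def2 by (rule CollectI, rule exI[of _ 0]) simp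

lemma om_add: "om a powi (j + k) = om a powi j * om a powi k"
  by (rule power_int_add) simp

lemma orbit_mem: assumes "w \<in> rot_orbit a z" shows "rot_orbit a w = rot_orbit a z"
proof -
  obtain k where w: "w = z * om a powi k" using assms unfolding orbit_def2 by blast
  show ?thesis
  proof (intro set_eqI iffI)
    fix y assume "y \<in> rot_orbit a w"
    then obtain j where "y = w * om a powi j" unfolding orbit_def2 by blast
    then have "y = z * om a powi (k + j)" using w by (simp add: om_add mult.assoc)
    then show "y \<in> rot_orbit a z" unfolding orbit_def2 by blast
  next
    fix y assume "y \<in> rot_orbit a z"
    then obtain j where y: "y = z * om a powi j" unfolding orbit_def2 by blast
    have "om a powi j = om a powi k * om a powi (j - k)"
      using om_add[of a k "j - k"] by simp
    then have "y = w * om a powi (j - k)" using w y by (simp add: mult.assoc)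
    then show "y \<in> rot_orbit a w" unfolding orbit_def2 by blast
  qed
qed

lemma orbit_mult: "rot_orbit a (z * om a powi j) = rot_orbit a z"
  by (rule orbit_mem) (auto simp: orbit_def2)

lemma topspace_circle [simp]: "topspace circle = S1"
  by (simp add: circle_def)

lemma part_rot: "part circle (rot_partition a)"
proof
  show "\<Union>(rot_partition a) = topspace circle"
    using orbit_sphere orbit_self unfolding rot_partition_def by fastforce
  fix D E x assume "D \<in> rot_partition a" "E \<in> rot_partition a" "x \<in> D" "x \<in> E"
  then show "D = E" unfolding rot_partition_def using orbit_mem by blast
next
  show "{} \<notin> rot_partition a" unfolding rot_partition_def using orbit_self by blast
qed

lemma orbit_in: "z \<in> S1 \<Longrightarrow> rot_orbit a z \<in> rot_partition a"
  unfolding rot_partition_def by blast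

lemma pp_rot: "z \<in> S1 \<Longrightarrow> part_proj (rot_partition a) z = rot_orbit a z"
  using part.pp_eq[OF part_rot orbit_in orbit_self] by blast

lemma infdist_rot:
  assumes "D \<in> rot_partition a"
  shows "infdist (om a powi j * z) D = infdist z D"
proof -
  obtain w where D: "D = rot_orbit a w" using assms unfolding rot_partition_def by blast
  let ?c = "om a powi j"
  have img: "(\<lambda>y. ?c * y) ` D = D"
  proof (intro set_eqI iffI)
    fix y assume "y \<in> (\<lambda>y. ?c * y) ` D"
    then obtain k where "y = ?c * (w * om a powi k)" using D unfolding orbit_def2 by blast
    then have "y = w * om a powi (j + k)" by (simp add: om_add mult_ac)
    then show "y \<in> D" using D unfolding orbit_def2 by blast
  next
    fix y assume "y \<in> D"
    then obtain k where y: "y = w * om a powi k" using D unfolding orbit_def2 by blast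
    have "om a powi k = ?c * om a powi (k - j)" using om_add[of a j "k - j"] by simp
    then have "y = ?c * (w * om a powi (k - j))" using y by (simp add: mult_ac)
    moreover have "w * om a powi (k - j) \<in> D" using D unfolding orbit_def2 by blast
    ultimately show "y \<in> (\<lambda>y. ?c * y) ` D" by blast
  qed
  have dd: "dist (?c * z) (?c * y) = dist z y" for y
  proof -
    have "dist (?c * z) (?c * y) = norm (?c * (z - y))" by (simp add: dist_norm right_diff_distrib)
    also have "\<dots> = norm (z - y)" by (simp add: norm_mult)
    finally show ?thesis by (simp add: dist_norm)
  qed
  have "infdist (?c * z) D = infdist (?c * z) ((\<lambda>y. ?c * y) ` D)" using img by simp
  also have "\<dots> = infdist z D"
    unfolding infdist_def by (simp add: image_image dd)
  finally show ?thesis .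
qed




lemma om_period:
  assumes "a = of_int p / of_int q" "q > 0"
  shows "om a powi q = 1"
proof -
  have qa: "complex_of_int q * complex_of_real a = complex_of_int p"
  proof -
    have "of_int q * a = of_int p" using assms by (simp add: field_simps)
    then have "complex_of_real (of_int q * a) = complex_of_real (of_int p)" by simp
    then show ?thesis by simp
  qed
  have "om a powi q = exp (of_int q * (2 * of_real pi * \<i> * of_real a))"
    unfolding om_def by (rule exp_power_int)
  also have "of_int q * (2 * of_real pi * \<i> * of_real a) = (2 * of_int p * pi) * \<i>"
    using qa by (simp add: algebra_simps)
  also have "exp \<dots> = 1" by (rule exp_integer_2pi) simp
  finally show ?thesis .
qed

lemma orbit_finite:
  assumes "a \<in> \<rat>"
  shows "finite (rot_orbit a z)"
proof -
  obtain p q where pq: "q > 0" "a = of_int p / of_int q" using Rats_cases'[OF assms] by metis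
  have "rot_orbit a z \<subseteq> (\<lambda>j. z * om a powi j) ` {0..<q}"
  proof
    fix y assume "y \<in> rot_orbit a z"
    then obtain k where y: "y = z * om a powi k" unfolding orbit_def2 by blast
    have k: "k = q * (k div q) + k mod q" by simp
    have "om a powi k = om a powi (q * (k div q)) * om a powi (k mod q)"
      by (subst k, rule om_add)
    also have "om a powi (q * (k div q)) = 1"
      by (simp add: power_int_mult om_period[OF pq(2,1)])
    finally have "y = z * om a powi (k mod q)" using y by simp
    moreover have "k mod q \<in> {0..<q}" using pq(1) by simp
    ultimately show "y \<in> (\<lambda>j. z * om a powi j) ` {0..<q}" by blast
  qed
  then show ?thesis by (rule finite_subset) simp
qed

lemma Hausdorff_rat:
  assumes "a \<in> \<rat>"
  shows "Hausdorff_space (quotient_space circle (rot_partition a))"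
proof -
  interpret P: part circle "rot_partition a" by (rule part_rot)
  show ?thesis unfolding Hausdorff_space_def P.topspace_Q
  proof (intro allI impI)
    fix D E assume DE: "D \<in> rot_partition a \<and> E \<in> rot_partition a \<and> D \<noteq> E"
    obtain d where d: "d \<in> S1" "D = rot_orbit a d" using DE unfolding rot_partition_def by blast
    obtain e where e: "e \<in> S1" "E = rot_orbit a e" using DE unfolding rot_partition_def by blast
    have clD: "closed D" using orbit_finite[OF assms] d by (simp add: finite_imp_closed)
    have clE: "closed E" using orbit_finite[OF assms] e by (simp add: finite_imp_closed)
    have neD: "D \<noteq> {}" and neE: "E \<noteq> {}" using d e orbit_self by auto
    have DS: "D \<subseteq> S1" and ES: "E \<subseteq> S1" using d e orbit_sphere by auto
    have disjDE: "D \<inter> E = {}" using DE P.disj by blast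
    define f where "f A B = {x \<in> S1. infdist x A < infdist x B}" for A B :: "complex set"
    have sat: "rot_orbit a x \<subseteq> f A B" if "x \<in> f A B" "A \<in> rot_partition a" "B \<in> rot_partition a" for x A B
    proof
      fix y assume "y \<in> rot_orbit a x"
      then obtain k where y: "y = x * om a powi k" unfolding orbit_def2 by blast
      have "x \<in> S1" using that(1) unfolding f_def by blast
      then have "y \<in> S1" using y by (simp add: norm_mult)
      moreover have "infdist y A = infdist x A" "infdist y B = infdist x B"
        using infdist_rot[OF that(2), of k x] infdist_rot[OF that(3), of k x] y by (simp_all add: mult.commute)
      ultimately show "y \<in> f A B" using that(1) unfolding f_def by simp
    qed
    define G where "G A B = {F \<in> rot_partition a. F \<subseteq> f A B}" for A B
    have UG: "\<Union>(G A B) = f A B" if "A \<in> rot_partition a" "B \<in> rot_partition a" for A B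
    proof
      show "\<Union>(G A B) \<subseteq> f A B" unfolding G_def by blast
      show "f A B \<subseteq> \<Union>(G A B)"
      proof
        fix x assume x: "x \<in> f A B"
        then have "x \<in> S1" unfolding f_def by blast
        then have "rot_orbit a x \<in> G A B" using sat[OF x that] orbit_in unfolding G_def by blast
        then show "x \<in> \<Union>(G A B)" using orbit_self by blast
      qed
    qed
    have opf: "openin circle (f A B)" for A B
    proof -
      have "open {x. infdist x A < infdist x B}"
        by (rule open_Collect_less) (intro continuous_intros)+
      then have "openin circle (S1 \<inter> {x. infdist x A < infdist x B})"
        unfolding circle_def by (rule openin_open_Int)
      moreover have "S1 \<inter> {x. infdist x A < infdist x B} = f A B" unfolding f_def by blast
      ultimately show ?thesis by simp
    qed
    have opG: "openin (quotient_space circle (rot_partition a)) (G A B)"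
      if "A \<in> rot_partition a" "B \<in> rot_partition a" for A B
      unfolding P.openin_Q using UG[OF that] opf unfolding G_def by auto
    have DG: "D \<in> G D E"
    proof -
      have "D \<subseteq> f D E"
      proof
        fix x assume x: "x \<in> D"
        have "infdist x D = 0" using x by simp
        moreover have "0 < infdist x E" using infdist_pos_not_in_closed[OF clE neE] x disjDE by blast
        ultimately show "x \<in> f D E" using x DS unfolding f_def by auto
      qed
      then show ?thesis using DE unfolding G_def by blast
    qed
    have EG: "E \<in> G E D"
    proof -
      have "E \<subseteq> f E D"
      proof
        fix x assume x: "x \<in> E"
        have "infdist x E = 0" using x by simp
        moreover have "0 < infdist x D" using infdist_pos_not_in_closed[OF clD neD] x disjDE by blast
        ultimately show "x \<in> f E D" using x ES unfolding f_def by auto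
      qed
      then show ?thesis using DE unfolding G_def by blast
    qed
    have dj: "disjnt (G D E) (G E D)"
    proof -
      have "f D E \<inter> f E D = {}" unfolding f_def by auto
      show ?thesis unfolding disjnt_def
      proof (rule ccontr)
        assume "G D E \<inter> G E D \<noteq> {}"
        then obtain F where "F \<in> rot_partition a" "F \<subseteq> f D E" "F \<subseteq> f E D" unfolding G_def by blast
        then have "F = {}" using \<open>f D E \<inter> f E D = {}\<close> by blast
        then show False using P.ne \<open>F \<in> rot_partition a\<close> by simp
      qed
    qed
    show "\<exists>U V. openin (quotient_space circle (rot_partition a)) U \<and>
               openin (quotient_space circle (rot_partition a)) V \<and> D \<in> U \<and> E \<in> V \<and> disjnt U V"
      using opG DE DG EG dj by blast
  qed
qed

lemma compact_union_rat:
  assumes "a \<in> \<rat>" and L: "compactin (quotient_space circle (rot_partition a)) L"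
  shows "compactin circle (\<Union>L)"
proof -
  interpret P: part circle "rot_partition a" by (rule part_rot)
  have cl: "closedin (quotient_space circle (rot_partition a)) L"
    by (rule compactin_imp_closedin[OF Hausdorff_rat[OF assms(1)] L])
  then have LD: "L \<subseteq> rot_partition a" and op: "openin circle (\<Union>(rot_partition a - L))"
    unfolding closedin_def P.topspace_Q P.openin_Q by auto
  have eq: "\<Union>L = S1 - \<Union>(rot_partition a - L)"
  proof
    show "\<Union>L \<subseteq> S1 - \<Union>(rot_partition a - L)"
      using LD P.disj P.U by fastforce
    show "S1 - \<Union>(rot_partition a - L) \<subseteq> \<Union>L"
      using P.U by auto
  qed
  have "closedin circle (\<Union>L)" unfolding eq using op
    by (metis closedin_diff closedin_topspace topspace_circle)
  then have "closed (\<Union>L)" unfolding circle_def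
    using closedin_closed_trans closed_sphere by blast
  moreover have "\<Union>L \<subseteq> S1" using eq by blast
  ultimately have "compact (\<Union>L)"
    by (metis compact_Int_closed compact_sphere inf.absorb_iff2)
  then show ?thesis unfolding circle_def using \<open>\<Union>L \<subseteq> S1\<close>
    by (simp add: compactin_subtopology)
qed

lemma rational_case:
  assumes "a \<in> \<rat>"
  shows "prop_CONT circle (rot_partition a) \<and> prop_COMP circle (rot_partition a)"
proof -
  interpret P: part circle "rot_partition a" by (rule part_rot)
  show ?thesis
  proof
    show "prop_CONT circle (rot_partition a)"
    proof (rule P.CONT_gen)
      fix L V assume L: "compactin (quotient_space circle (rot_partition a)) L"
        and V: "openin (quotient_space circle (rot_partition a)) V"
      show "openin (compact_open circle (Delta_maps circle (rot_partition a)))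
         {h \<in> Delta_maps circle (rot_partition a). h ` \<Union> L \<subseteq> \<Union> V}"
        by (rule P.subbasic) (use compact_union_rat[OF assms L] V P.openin_Q in auto)
    qed
    show "prop_COMP circle (rot_partition a)"
      by (rule P.COMP_gen) (rule compact_union_rat[OF assms])
  qed
qed




definition ee :: "real \<Rightarrow> complex" where "ee t = exp (\<i> * of_real (2 * pi * t))"

lemma norm_ee [simp]: "norm (ee t) = 1" by (simp add: ee_def)

lemma om_powi_ee: "om a powi k = ee (of_int k * a)"
proof -
  have "om a powi k = exp (of_int k * (2 * of_real pi * \<i> * of_real a))"
    unfolding om_def by (rule exp_power_int)
  also have "of_int k * (2 * of_real pi * \<i> * of_real a) = \<i> * of_real (2 * pi * (of_int k * a))"
    by (simp add: algebra_simps)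
  finally show ?thesis by (simp add: ee_def)
qed

lemma ee_int: "ee (t - of_int h) = ee t"
proof -
  have "\<i> * of_real (2 * pi * (t - of_int h)) = \<i> * of_real (2 * pi * t) - (2 * of_int h * pi) * \<i>"
    by (simp add: algebra_simps)
  then have "ee (t - of_int h) = exp (\<i> * of_real (2 * pi * t)) / exp ((2 * of_int h * pi) * \<i>)"
    by (simp add: ee_def exp_diff)
  also have "exp ((2 * of_int h * pi) * \<i>) = 1" by (rule exp_integer_2pi) simp
  finally show ?thesis by (simp add: ee_def)
qed

lemma cont_ee: "continuous_on UNIV (\<lambda>t. z * ee t)"
  unfolding ee_def by (intro continuous_intros)

lemma ee_surj: assumes "norm u = 1" obtains x where "ee x = u"
proof
  show "ee (Arg2pi u / (2 * pi)) = u"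
    using assms complex_norm_eq_1_exp by (simp add: ee_def)
qed

lemma local_ball:
  assumes "openin circle W" "w \<in> W" "z \<in> S1"
  obtains x d where "d > 0" "z * ee x = w" "\<And>t. \<bar>t - x\<bar> < d \<Longrightarrow> z * ee t \<in> W"
proof -
  obtain T where T: "open T" "W = S1 \<inter> T" using assms(1) unfolding circle_def openin_open by blast
  have z0: "z \<noteq> 0" using assms(3) by auto
  have "norm (w / z) = 1" using assms T by (simp add: norm_divide)
  then obtain x where x: "ee x = w / z" by (rule ee_surj)
  then have zx: "z * ee x = w" using z0 by simp
  have "open ((\<lambda>t. z * ee t) -` T)" by (rule open_vimage[OF T(1) cont_ee])
  moreover have "x \<in> (\<lambda>t. z * ee t) -` T" using zx assms T by auto
  ultimately obtain d where d: "d > 0" "ball x d \<subseteq> (\<lambda>t. z * ee t) -` T"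
    by (meson openE)
  show ?thesis
  proof (rule that[OF d(1) zx])
    fix t assume "\<bar>t - x\<bar> < d"
    then have "t \<in> ball x d" by (simp add: dist_real_def abs_minus_commute)
    then have "z * ee t \<in> T" using d by blast
    moreover have "z * ee t \<in> S1" using assms(3) by (simp add: norm_mult)
    ultimately show "z * ee t \<in> W" using T by blast
  qed
qed

lemma dense_orbit:
  assumes irr: "a \<notin> \<rat>" and z: "z \<in> S1" and W: "openin circle W" "w \<in> W"
  shows "\<exists>k. z * om a powi k \<in> W"
proof -
  obtain x d where d: "d > 0" "z * ee x = w" "\<And>t. \<bar>t - x\<bar> < d \<Longrightarrow> z * ee t \<in> W"
    using local_ball[OF W z] by metis
  obtain h k where hk: "\<bar>of_int k * a - of_int h - x\<bar> < d"
    using sequence_of_fractional_parts_is_dense[OF irr d(1), where \<alpha> = x] by metis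
  have "z * ee (of_int k * a - of_int h) \<in> W" using d(3) hk by simp
  then have "z * om a powi k \<in> W" by (simp add: ee_int om_powi_ee)
  then show ?thesis by blast
qed

lemma non_isolated:
  assumes W: "openin circle W" "w \<in> W"
  shows "\<exists>w'\<in>W. w' \<noteq> w"
proof -
  have one: "(1::complex) \<in> S1" by simp
  obtain x d where d: "d > 0" "1 * ee x = w" "\<And>t. \<bar>t - x\<bar> < d \<Longrightarrow> 1 * ee t \<in> W"
    using local_ball[OF W one] by metis
  define t where "t = x + min (d/2) (1/2)"
  have tW: "ee t \<in> W" using d(1) d(3)[of t] by (simp add: t_def)
  have "ee t \<noteq> ee x"
  proof
    assume "ee t = ee x"
    then obtain n :: int where n: "\<i> * of_real (2 * pi * t) = \<i> * of_real (2 * pi * x) + (of_int (2 * n) * pi) * \<i>"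
      unfolding ee_def exp_eq by blast
    have "Im (\<i> * of_real (2 * pi * t)) = Im (\<i> * of_real (2 * pi * x) + (of_int (2 * n) * pi) * \<i>)"
      using n by simp
    then have "2 * pi * t = 2 * pi * x + 2 * of_int n * pi" by simp
    then have "(2 * pi) * (t - x) = (2 * pi) * of_int n" by (simp add: algebra_simps)
    then have "t - x = of_int n" using pi_gt_zero by simp
    moreover have "0 < t - x" "t - x < 1" using d(1) by (auto simp: t_def)
    ultimately have "(0::real) < of_int n" "of_int n < (1::real)" by auto
    then have "0 < n" "n < 1" by simp_all
    then show False by simp
  qed
  then show ?thesis using tW d(2) by auto
qed




lemma indiscrete:
  assumes irr: "a \<notin> \<rat>" and V: "openin (quotient_space circle (rot_partition a)) V"
  shows "V = {} \<or> V = rot_partition a"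
proof (cases "V = {}")
  case False
  interpret P: part circle "rot_partition a" by (rule part_rot)
  have VD: "V \<subseteq> rot_partition a" and op: "openin circle (\<Union>V)" using V P.openin_Q by auto
  obtain D where D: "D \<in> V" using False by blast
  obtain x where x: "x \<in> D" using P.ne D VD by (metis ex_in_conv subsetD)
  have "rot_partition a \<subseteq> V"
  proof
    fix F assume F: "F \<in> rot_partition a"
    then obtain z where z: "z \<in> S1" "F = rot_orbit a z" unfolding rot_partition_def by blast
    obtain k where "z * om a powi k \<in> \<Union>V" using dense_orbit[OF irr z(1) op, of x] x D by blast
    then obtain G where G: "G \<in> V" "z * om a powi k \<in> G" by blast
    have "z * om a powi k \<in> F" using z unfolding orbit_def2 by blast
    then have "F = G" using P.disj F G VD by blast
    then show "F \<in> V" using G by simp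
  qed
  then show ?thesis using VD by blast
qed simp

lemma all_compact:
  assumes irr: "a \<notin> \<rat>" and L: "L \<subseteq> rot_partition a"
  shows "compactin (quotient_space circle (rot_partition a)) L"
proof -
  interpret P: part circle "rot_partition a" by (rule part_rot)
  show ?thesis unfolding compactin_def P.topspace_Q
  proof (intro conjI allI impI)
    show "L \<subseteq> rot_partition a" by (rule L)
    fix \<U> assume U: "(\<forall>U\<in>\<U>. openin (quotient_space circle (rot_partition a)) U) \<and> L \<subseteq> \<Union> \<U>"
    show "\<exists>\<F>. finite \<F> \<and> \<F> \<subseteq> \<U> \<and> L \<subseteq> \<Union> \<F>"
    proof (cases "L = {}")
      case True then show ?thesis by (intro exI[of _ "{}"]) simp
    next
      case False
      then obtain D U0 where "D \<in> L" "D \<in> U0" "U0 \<in> \<U>" using U by blast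
      then have "U0 = rot_partition a" using indiscrete[OF irr] U by blast
      then show ?thesis using \<open>U0 \<in> \<U>\<close> L by (intro exI[of _ "{U0}"]) auto
    qed
  qed
qed

lemma irr_CONT:
  assumes irr: "a \<notin> \<rat>"
  shows "prop_CONT circle (rot_partition a)"
proof -
  interpret P: part circle "rot_partition a" by (rule part_rot)
  show ?thesis
  proof (rule P.CONT_gen)
    fix L V assume L: "compactin (quotient_space circle (rot_partition a)) L"
      and V: "openin (quotient_space circle (rot_partition a)) V"
    let ?DM = "Delta_maps circle (rot_partition a)"
    have top: "openin (compact_open circle ?DM) ?DM"
      using openin_topspace[of "compact_open circle ?DM"] by (simp only: P.topspace_CO)
    have LS: "\<Union>L \<subseteq> S1"
      using compactin_subset_topspace[OF L] P.topspace_Q P.U by auto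
    show "openin (compact_open circle ?DM) {h \<in> ?DM. h ` \<Union> L \<subseteq> \<Union> V}"
    proof (cases "V = {}")
      case True
      show ?thesis
      proof (cases "\<Union>L = {}")
        case True
        then have e: "{h \<in> ?DM. h ` \<Union> L \<subseteq> \<Union> V} = ?DM" unfolding True by simp
        show ?thesis unfolding e by (rule top)
      next
        case False
        then have e: "{h \<in> ?DM. h ` \<Union> L \<subseteq> \<Union> V} = {}" using \<open>V = {}\<close> by auto
        show ?thesis unfolding e by (rule openin_empty)
      qed
    next
      case False
      then have "V = rot_partition a" using indiscrete[OF irr V] by simp
      then have UV: "\<Union>V = S1" using P.U by simp
      have "{h \<in> ?DM. h ` \<Union> L \<subseteq> \<Union> V} = ?DM"
      proof (intro set_eqI iffI)
        fix h assume h: "h \<in> ?DM"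
        then have "continuous_map circle circle h" by (simp add: Delta_maps_def End_maps_def)
        then have "h ` S1 \<subseteq> S1" using continuous_map_image_subset_topspace by fastforce
        then show "h \<in> {h \<in> ?DM. h ` \<Union> L \<subseteq> \<Union> V}" using h LS UV by blast
      qed simp
      then show ?thesis using top by (simp only:)
    qed
  qed
qed

lemma irr_not_COMP:
  assumes irr: "a \<notin> \<rat>"
  shows "\<not> prop_COMP circle (rot_partition a)"
proof
  assume C: "prop_COMP circle (rot_partition a)"
  interpret P: part circle "rot_partition a" by (rule part_rot)
  define Ob where "Ob = rot_orbit a 1"
  have one: "(1::complex) \<in> S1" by simp
  have Oin: "Ob \<in> rot_partition a" unfolding Ob_def by (rule orbit_in[OF one])
  define L where "L = rot_partition a - {Ob}"
  have "compactin (quotient_space circle (rot_partition a)) L"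
    by (rule all_compact[OF irr]) (auto simp: L_def)
  then obtain K where K: "compactin circle K" "part_proj (rot_partition a) ` K = L"
    using C unfolding prop_COMP_def by blast
  have KS: "K \<subseteq> S1" using compactin_subset_topspace[OF K(1)] by simp
  have KO: "K \<inter> Ob = {}"
  proof (rule ccontr)
    assume "K \<inter> Ob \<noteq> {}"
    then obtain x where x: "x \<in> K" "x \<in> Ob" by blast
    then have "part_proj (rot_partition a) x = Ob"
      using pp_rot[of x a] KS orbit_mem[of x a 1] unfolding Ob_def by auto
    then have "Ob \<in> L" using K(2) x by blast
    then show False unfolding L_def by blast
  qed
  have cover: "\<exists>y\<in>K. \<exists>j. z = om a powi j * y" if z: "z \<in> S1" "z \<notin> Ob" for z
  proof -
    have "rot_orbit a z \<noteq> Ob" using z orbit_self by metis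
    then have "rot_orbit a z \<in> L" unfolding L_def using orbit_in[OF z(1)] by blast
    then obtain y where y: "y \<in> K" "part_proj (rot_partition a) y = rot_orbit a z" using K(2) by blast
    then have "rot_orbit a y = rot_orbit a z" using pp_rot KS by auto
    then have "z \<in> rot_orbit a y" using orbit_self by metis
    then obtain j where "z = y * om a powi j" unfolding orbit_def2 by blast
    then show ?thesis using y(1) by (auto simp: mult.commute)
  qed
  define K' where "K' = insert 1 K"
  have K'S: "K' \<subseteq> S1" using KS by (simp add: K'_def)
  have cK': "compact K'"
    using K(1) unfolding K'_def circle_def by (simp add: compactin_subtopology)
  define G where "G = range (\<lambda>j::int. (\<lambda>y. om a powi j * y) ` K')"
  have cntG: "countable G" unfolding G_def by simp
  have UG: "\<Union>G = S1"
  proof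
    show "\<Union>G \<subseteq> S1" using K'S unfolding G_def by (auto simp: norm_mult)
    show "S1 \<subseteq> \<Union>G"
    proof
      fix z assume z: "z \<in> S1"
      show "z \<in> \<Union>G"
      proof (cases "z \<in> Ob")
        case True
        then obtain k where "z = 1 * om a powi k" unfolding Ob_def orbit_def2 by blast
        then have "z \<in> (\<lambda>y. om a powi k * y) ` K'" unfolding K'_def by auto
        then show ?thesis unfolding G_def by blast
      next
        case False
        then obtain y j where "y \<in> K" "z = om a powi j * y" using cover z by blast
        then have "z \<in> (\<lambda>y. om a powi j * y) ` K'" unfolding K'_def by auto
        then show ?thesis unfolding G_def by blast
      qed
    qed
  qed
  have cm: "completely_metrizable_space circle"
    unfolding circle_def
    by (rule completely_metrizable_space_closedin[OF completely_metrizable_space_euclidean]) simp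
  have "\<exists>T\<in>G. \<not> (closedin circle T \<and> circle interior_of T = {})"
  proof (rule ccontr)
    assume "\<not> ?thesis"
    then have "circle interior_of \<Union>G = {}"
      using Baire_category_alt[OF disjI1[OF cm] cntG] by blast
    then show False using UG one by (metis empty_iff interior_of_topspace topspace_circle)
  qed
  then obtain j where j: "\<not> (closedin circle ((\<lambda>y. om a powi j * y) ` K') \<and>
      circle interior_of ((\<lambda>y. om a powi j * y) ` K') = {})" unfolding G_def by blast
  let ?T = "(\<lambda>y. om a powi j * y) ` K'"
  have "compact ?T" by (rule compact_continuous_image[OF _ cK']) (intro continuous_intros)
  moreover have "?T \<subseteq> S1" using K'S by (auto simp: norm_mult)
  ultimately have "closedin circle ?T" unfolding circle_def
    by (simp add: closed_subset compact_imp_closed)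
  then have "circle interior_of ?T \<noteq> {}" using j by blast
  then obtain w where w: "w \<in> circle interior_of ?T" by blast
  let ?c = "om a powi j"
  define W where "W = circle interior_of ?T \<inter> (S1 - {?c})"
  have opW: "openin circle W"
  proof -
    have "openin circle (S1 - {?c})" unfolding circle_def
      by (rule openin_diff) (auto intro: closedin_singleton)
    then show ?thesis unfolding W_def by (simp add: openin_Int)
  qed
  obtain w' where w': "w' \<in> W"
  proof -
    have op0: "openin circle (circle interior_of ?T)" by simp
    obtain w2 where "w2 \<in> circle interior_of ?T" "w2 \<noteq> ?c"
      using non_isolated[OF op0 w] w by metis
    moreover have "w2 \<in> S1" using calculation(1) interior_of_subset_topspace by fastforce
    ultimately show ?thesis using that unfolding W_def by blast
  qed
  obtain k where k: "1 * om a powi k \<in> W" using dense_orbit[OF irr one opW w'] by blast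
  then have "om a powi k \<in> ?T" "om a powi k \<noteq> ?c"
    unfolding W_def using interior_of_subset[of circle ?T] by auto
  then obtain y where y: "y \<in> K'" "om a powi k = ?c * y" by blast
  then have "y \<noteq> 1" using \<open>om a powi k \<noteq> ?c\<close> by auto
  then have yK: "y \<in> K" using y(1) unfolding K'_def by simp
  have "om a powi k = ?c * om a powi (k - j)" using om_add[of a j "k - j"] by simp
  then have "y = om a powi (k - j)" using y(2) by simp
  then have "y \<in> Ob" unfolding Ob_def orbit_def2 by auto
  then show False using KO yK by blast
qed


theorem mainTheorem11:
  fixes \<alpha> :: real
  assumes "0 < \<alpha>" and "\<alpha> < 1"
  shows "prop_CONT circle (rot_partition \<alpha>) \<and>
         (prop_COMP circle (rot_partition \<alpha>) \<longleftrightarrow> \<alpha> \<in> \<rat>)"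
  using rational_case irr_CONT irr_not_COMP by blast

end
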